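(* The class of minus-algebras is a proper quasivariety: it is not closed under homomorphic images, so it cannot be axiomatised by identities alone.
   Context: A minus-algebra is an algebra $(A,\circ,-)$ with two binary operations satisfying: $x\circ y=y-(y-x)$; $(A,\circ)$ is a right normal band (a semigroup with $x\circ x=x$ and $(x\circ y)\circ z=(y\circ x)\circ z$); there is an element $0$ with $x-x=0$ for all $x$; $x\circ0=0\circ x=0$; $(x-y)\circ x=x-y$; $(x-y)\circ y=0$; $(x-y)\circ z=(x\circ z)-y$; and the quasi-identity $s-x=t-x\ \&\ x\circ s=x\circ t\Rightarrow s=t$. *)

theory Defs
  imports Main
begin

definition alg_closed :: "'a set \<Rightarrow> ('a \<Rightarrow> 'a \<Rightarrow> 'a) \<Rightarrow> ('a \<Rightarrow> 'a \<Rightarrow> 'a) \<Rightarrow> bool" where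
  "alg_closed A c m \<longleftrightarrow> (\<forall>x\<in>A. \<forall>y\<in>A. c x y \<in> A \<and> m x y \<in> A)"

definition minus_algebra :: "'a set \<Rightarrow> ('a \<Rightarrow> 'a \<Rightarrow> 'a) \<Rightarrow> ('a \<Rightarrow> 'a \<Rightarrow> 'a) \<Rightarrow> bool" where
  "minus_algebra A c m \<longleftrightarrow>
     alg_closed A c m \<and>
     (\<forall>x\<in>A. \<forall>y\<in>A. c x y = m y (m y x)) \<and>
     (\<forall>x\<in>A. \<forall>y\<in>A. \<forall>z\<in>A. c (c x y) z = c x (c y z)) \<and>
     (\<forall>x\<in>A. c x x = x) \<and>
     (\<forall>x\<in>A. \<forall>y\<in>A. \<forall>z\<in>A. c (c x y) z = c (c y x) z) \<and>
     (\<exists>e\<in>A.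
        (\<forall>x\<in>A. m x x = e) \<and>
        (\<forall>x\<in>A. c x e = e \<and> c e x = e) \<and>
        (\<forall>x\<in>A. \<forall>y\<in>A. c (m x y) x = m x y) \<and>
        (\<forall>x\<in>A. \<forall>y\<in>A. c (m x y) y = e) \<and>
        (\<forall>x\<in>A. \<forall>y\<in>A. \<forall>z\<in>A. c (m x y) z = m (c x z) y)) \<and>
     (\<forall>s\<in>A. \<forall>t\<in>A. \<forall>x\<in>A. m s x = m t x \<and> c x s = c x t \<longrightarrow> s = t)"

definition alg_hom :: "('a \<Rightarrow> 'b) \<Rightarrow> 'a set \<Rightarrow> ('a \<Rightarrow> 'a \<Rightarrow> 'a) \<Rightarrow> ('a \<Rightarrow> 'a \<Rightarrow> 'a)
                       \<Rightarrow> 'b set \<Rightarrow> ('b \<Rightarrow> 'b \<Rightarrow> 'b) \<Rightarrow> ('b \<Rightarrow> 'b \<Rightarrow> 'b) \<Rightarrow> bool" where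
  "alg_hom h A cA mA B cB mB \<longleftrightarrow>
     (\<forall>x\<in>A. h x \<in> B) \<and>
     (\<forall>x\<in>A. \<forall>y\<in>A. h (cA x y) = cB (h x) (h y) \<and> h (mA x y) = mB (h x) (h y))"

end

theory Submission
  imports Defs
begin

definition mA :: "nat \<Rightarrow> nat \<Rightarrow> nat" where
  "mA x y = [[0, 0, 0, 0, 0, 0], [1, 0, 0, 1, 0, 0], [2, 0, 0, 2, 0, 0],
             [3, 3, 3, 0, 0, 0], [4, 3, 3, 1, 0, 0], [5, 3, 3, 2, 0, 0]] ! x ! y"

definition cA :: "nat \<Rightarrow> nat \<Rightarrow> nat" where
  "cA x y = mA y (mA y x)"

definition mB :: "nat \<Rightarrow> nat \<Rightarrow> nat" where
  "mB x y = [[0, 0, 0, 0, 0], [1, 0, 1, 0, 0], [2, 2, 0, 0, 0],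
             [3, 2, 1, 0, 0], [4, 2, 1, 0, 0]] ! x ! y"

definition cB :: "nat \<Rightarrow> nat \<Rightarrow> nat" where
  "cB x y = mB y (mB y x)"

definition hh :: "nat \<Rightarrow> nat" where
  "hh x = [0, 1, 1, 2, 3, 4] ! x"

lemma A_ok: "minus_algebra {0,1,2,3,4,5} cA mA"
  unfolding minus_algebra_def alg_closed_def
  apply (intro conjI)
  apply (simp_all add: cA_def mA_def)
  done

lemma B_closed: "alg_closed {0,1,2,3,4} cB mB"
  unfolding alg_closed_def by (simp add: cB_def mB_def)

lemma hom_ok: "alg_hom hh {0,1,2,3,4,5} cA mA {0,1,2,3,4} cB mB"
  unfolding alg_hom_def by (simp add: hh_def cA_def mA_def cB_def mB_def)

lemma img: "hh ` {0,1,2,3,4,5} = {0,1,2,3,4}"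
  by (simp add: hh_def insert_commute)

lemma B_not: "\<not> minus_algebra {0,1,2,3,4} cB mB"
proof
  assume "minus_algebra {0,1,2,3,4} cB mB"
  then have "\<forall>s\<in>{0,1,2,3,4}. \<forall>t\<in>{0,1,2,3,4}. \<forall>x\<in>{0,1,2,3,4::nat}.
     mB s x = mB t x \<and> cB x s = cB x t \<longrightarrow> s = t"
    unfolding minus_algebra_def by (elim conjE) assumption
  then have "mB 3 1 = mB 4 1 \<and> cB 1 3 = cB 1 4 \<longrightarrow> (3::nat) = 4" by blast
  then show False by (simp add: cB_def mB_def)
qed

theorem proposition5p2:
  shows "\<exists>(A::nat set) cA mA (B::nat set) cB mB h.
           minus_algebra A cA mA \<and> alg_closed B cB mB \<and>
           alg_hom h A cA mA B cB mB \<and> h ` A = B \<and>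
           \<not> minus_algebra B cB mB"
  using A_ok B_closed hom_ok img B_not by blast

end
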